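(* Let the sites of $S$ have independent uniformly random positions in $\mathbb T^d$, let $k\ge2$ be fixed and $A\subseteq S$ with $|A|=k$. There is a constant $c$ depending only on $k,d,\mathfrak p$ such that $$\Pr[A\text{ is relevant}]\le c\,\frac{\prod_{s_i\in A}w_i}{\left(\sum_{s_i\notin A}w_i\right)^{k-1}}.$$
   Context: Sites $S=\{s_1,\dots,s_n\}$ lie in $\mathbb T^d$ ($[0,1]^d$ with opposite faces identified) with distance $\mathrm{dist}(p,q)=\left(\sum_{i}|p_i-q_i|_\circ^{\mathfrak p}\right)^{1/\mathfrak p}$ ($\max$ for $\mathfrak p=\infty$), $|a-b|_\circ=\min\{|a-b|,1-|a-b|\}$. Site $s_i$ has weight $w_i\ge1$ and $\omega_i=w_i^{1/d}$. For $A=\{s_1,\dots,s_k\}$ indexed so that $s_1$ has minimum weight in $A$, define $R_A=\max_{i\in[k]}\frac{\mathrm{dist}(s_1,s_i)}{\omega_1+\omega_i}$. $A$ is relevant if there exist a point $p\in\mathbb T^d$ and a radius $r\ge R_A$ with $\mathrm{dist}(s_1,p)\le\omega_1 r$ and $\mathrm{dist}(s_i,p)>\omega_i r$ for all $s_i\notin A$. *)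

theory Defs
  imports "HOL-Analysis.Analysis"
begin

text \<open>Points of the torus T^d are represented by their representatives in [0,1)^d,
  with the dimension d given by the finite index type 'd (d = CARD('d)).\<close>

definition unit_cube :: "(real ^ 'd) set" where
  "unit_cube = {x. \<forall>j. 0 \<le> x $ j \<and> x $ j < 1}"

definition circ_dist :: "real \<Rightarrow> real \<Rightarrow> real" where
  "circ_dist a b = min \<bar>a - b\<bar> (1 - \<bar>a - b\<bar>)"

definition tdist :: "ennreal \<Rightarrow> real ^ 'd \<Rightarrow> real ^ 'd \<Rightarrow> real" where
  "tdist p x y =
     (if p = \<infinity> then Max (range (\<lambda>i. circ_dist (x $ i) (y $ i)))
      else (\<Sum>i\<in>UNIV. circ_dist (x $ i) (y $ i) powr enn2real p) powr (1 / enn2real p))"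

definition omega :: "'d itself \<Rightarrow> (nat \<Rightarrow> real) \<Rightarrow> nat \<Rightarrow> real" where
  "omega _ w i = w i powr (1 / real CARD('d))"

definition minsite :: "(nat \<Rightarrow> real) \<Rightarrow> nat set \<Rightarrow> nat" where
  "minsite w A = (LEAST i. i \<in> A \<and> (\<forall>j\<in>A. w i \<le> w j))"

definition R_A :: "ennreal \<Rightarrow> (nat \<Rightarrow> real) \<Rightarrow> (nat \<Rightarrow> real ^ 'd) \<Rightarrow> nat set \<Rightarrow> real" where
  "R_A p w x A = (let a = minsite w A in
      Max ((\<lambda>i. tdist p (x a) (x i) / (omega TYPE('d) w a + omega TYPE('d) w i)) ` A))"

text \<open>Sites are indexed by {..<n}; x i is the position of site s_i.\<close>
definition relevant :: "ennreal \<Rightarrow> nat \<Rightarrow> (nat \<Rightarrow> real) \<Rightarrow> (nat \<Rightarrow> real ^ 'd) \<Rightarrow> nat set \<Rightarrow> bool" where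
  "relevant p n w x A = (let a = minsite w A in
     \<exists>q\<in>unit_cube. \<exists>r. r \<ge> R_A p w x A \<and>
        tdist p (x a) q \<le> omega TYPE('d) w a * r \<and>
        (\<forall>i\<in>{..<n} - A. tdist p (x i) q > omega TYPE('d) w i * r))"

definition site_space :: "nat \<Rightarrow> (nat \<Rightarrow> real ^ 'd) measure" where
  "site_space n = PiM {..<n} (\<lambda>_. uniform_measure lborel unit_cube)"

end

theory Submission
  imports Defs "HOL-Probability.Probability"
begin


definition dinf :: "real ^ 'd \<Rightarrow> real ^ 'd \<Rightarrow> real" where
  "dinf x y = Max (range (\<lambda>i. circ_dist (x $ i) (y $ i)))"

lemma circ_nonneg: "\<bar>a - b\<bar> \<le> 1 \<Longrightarrow> 0 \<le> circ_dist a b"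
  by (simp add: circ_dist_def)

lemma circ_le_half: "circ_dist a b \<le> 1/2"
  by (simp add: circ_dist_def min_def)

lemma circ_le_abs: "circ_dist a b \<le> \<bar>a - b\<bar>"
  by (simp add: circ_dist_def)

lemma circ_sym: "circ_dist a b = circ_dist b a"
  by (simp add: circ_dist_def abs_minus_commute)

lemma circ_tri:
  assumes "0 \<le> a" "a < 1" "0 \<le> b" "b < 1" "0 \<le> c" "c < 1"
  shows "circ_dist a c \<le> circ_dist a b + circ_dist b c"
  using assms unfolding circ_dist_def min_def by (auto simp: abs_if split: if_splits)

lemma circ_cases:
  assumes "0 \<le> a" "a < 1" "0 \<le> b" "b < 1" "circ_dist a b \<le> s"
  shows "(b - s \<le> a \<and> a \<le> b + s) \<or> (b + 1 - s \<le> a \<and> a \<le> b + 1 + s) \<or> (b - 1 - s \<le> a \<and> a \<le> b - 1 + s)"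
  using assms unfolding circ_dist_def min_def by (auto simp: abs_if split: if_splits)

lemma dinf_le_iff: "dinf x y \<le> s \<longleftrightarrow> (\<forall>i. circ_dist (x $ i) (y $ i) \<le> s)"
  unfolding dinf_def by (subst Max_le_iff) auto

lemma dinf_ge: "circ_dist (x $ i) (y $ i) \<le> dinf x y"
  unfolding dinf_def by (rule Max_ge) auto

lemma dinf_attained: "\<exists>i. dinf x y = circ_dist (x $ i) (y $ i)"
proof -
  have "dinf x y \<in> range (\<lambda>i. circ_dist (x $ i) (y $ i))"
    unfolding dinf_def by (rule Max_in) auto
  thus ?thesis by auto
qed

lemma dinf_le_half: "dinf x y \<le> 1/2"
  using circ_le_half unfolding dinf_le_iff by blast

lemma dinf_self: "dinf x x = 0"
  unfolding dinf_def circ_dist_def by simp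

lemma dinf_sym: "dinf x y = dinf y x"
  unfolding dinf_def by (simp add: circ_sym)

lemma dinf_tri:
  assumes "x \<in> unit_cube" "y \<in> unit_cube" "z \<in> unit_cube"
  shows "dinf x z \<le> dinf x y + dinf y z"
  unfolding dinf_le_iff[of x z]
proof
  fix i
  have "circ_dist (x$i) (z$i) \<le> circ_dist (x$i) (y$i) + circ_dist (y$i) (z$i)"
    using assms by (intro circ_tri) (auto simp: unit_cube_def)
  also have "\<dots> \<le> dinf x y + dinf y z" by (intro add_mono dinf_ge)
  finally show "circ_dist (x$i) (z$i) \<le> dinf x y + dinf y z" .
qed

lemma dinf_nonneg:
  assumes "x \<in> unit_cube" "y \<in> unit_cube"
  shows "0 \<le> dinf x y"
proof -
  obtain i :: 'a where True by auto
  have "0 \<le> circ_dist (x$i) (y$i)" using assms by (intro circ_nonneg) (auto simp: unit_cube_def abs_if dest!: spec[of _ i])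
  also have "\<dots> \<le> dinf x y" by (rule dinf_ge)
  finally show ?thesis .
qed


lemma enn2real_ge1: "(p::ennreal) \<ge> 1 \<Longrightarrow> p \<noteq> \<infinity> \<Longrightarrow> enn2real p \<ge> 1"
  by (metis enn2real_1 enn2real_mono infinity_ennreal_def top.not_eq_extremum)

lemma tdist_dinf:
  fixes x y :: "real ^ 'd"
  assumes "x \<in> unit_cube" "y \<in> unit_cube" "p \<ge> 1"
  shows "dinf x y \<le> tdist p x y \<and> tdist p x y \<le> real CARD('d) * dinf x y"
proof (cases "p = \<infinity>")
  case True
  have d1: "1 \<le> real CARD('d)" by simp
  have "0 \<le> dinf x y" using assms dinf_nonneg by blast
  then show ?thesis using True d1 unfolding tdist_def dinf_def[symmetric]
    by (simp add: mult_le_cancel_right1)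
next
  case False
  define P where "P = enn2real p"
  have P1: "P \<ge> 1" using enn2real_ge1 assms False P_def by blast
  define c where "c i = circ_dist (x$i) (y$i)" for i
  have c0: "0 \<le> c i" for i unfolding c_def
    using assms by (intro circ_nonneg) (auto simp: unit_cube_def abs_if dest!: spec[of _ i])
  have T: "tdist p x y = (\<Sum>i\<in>UNIV. c i powr P) powr (1/P)"
    unfolding tdist_def c_def P_def using False by simp
  obtain j where j: "dinf x y = c j" using dinf_attained c_def by metis
  have cj: "c i \<le> c j" for i using dinf_ge[of x i y] j c_def by simp
  have "c j = (c j powr P) powr (1/P)" using P1 c0[of j] by (simp add: powr_powr)
  also have "\<dots> \<le> (\<Sum>i\<in>UNIV. c i powr P) powr (1/P)"
    using P1 c0 by (intro powr_mono2) (auto intro!: member_le_sum)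
  finally have lo: "dinf x y \<le> tdist p x y" using T j by simp
  have "(\<Sum>i\<in>UNIV. c i powr P) \<le> (\<Sum>i\<in>(UNIV::'d set). c j powr P)"
    using P1 c0 cj by (intro sum_mono powr_mono2) auto
  also have "\<dots> = real CARD('d) * c j powr P" by simp
  finally have "tdist p x y \<le> (real CARD('d) * c j powr P) powr (1/P)"
    unfolding T using P1 c0 by (intro powr_mono2) (auto intro!: sum_nonneg)
  also have "\<dots> = real CARD('d) powr (1/P) * c j"
    using P1 c0[of j] by (simp add: powr_mult powr_powr)
  also have "\<dots> \<le> real CARD('d) * c j"
  proof -
    have "real CARD('d) powr (1/P) \<le> real CARD('d) powr 1"
      using P1 by (intro powr_mono) auto
    thus ?thesis using c0[of j] by (intro mult_right_mono) auto
  qed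
  finally show ?thesis using lo j by simp
qed


lemma minsite_props:
  assumes "finite A" "A \<noteq> {}"
  shows "minsite w A \<in> A \<and> (\<forall>j\<in>A. w (minsite w A) \<le> w j)"
proof -
  obtain i where i: "i \<in> A" "\<forall>j\<in>A. w i \<le> w j"
    using ex_min_if_finite[of "w ` A"] assms
    by (metis (mono_tags, lifting) arg_min_if_finite(1) arg_min_least assms(1,2) linorder_not_le)
  show ?thesis unfolding minsite_def
    by (rule LeastI[of "\<lambda>i. i \<in> A \<and> (\<forall>j\<in>A. w i \<le> w j)" i]) (use i in auto)
qed

lemma omega_ge1: "w i \<ge> 1 \<Longrightarrow> omega TYPE('d) w i \<ge> 1"
  unfolding omega_def by (simp add: ge_one_powr_ge_zero)

lemma omega_mono: "1 \<le> w i \<Longrightarrow> w i \<le> w j \<Longrightarrow> omega TYPE('d) w i \<le> omega TYPE('d) w j"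
  unfolding omega_def by (intro powr_mono2) auto

definition grid :: "nat \<Rightarrow> (real ^ 'd) set" where
  "grid N = {g. \<forall>i. \<exists>t<N. g $ i = real t / real N}"

lemma grid_cube: "N > 0 \<Longrightarrow> grid N \<subseteq> unit_cube"
proof
  fix x :: "real ^ 'd" assume N: "N > 0" and x: "x \<in> grid N"
  show "x \<in> unit_cube" unfolding unit_cube_def
  proof (safe)
    fix j
    obtain t where t: "t < N" "x$j = real t / real N" using x unfolding grid_def by blast
    show "0 \<le> x$j" "x$j < 1" using t N by auto
  qed
qed

lemma grid_approx:
  fixes q :: "real ^ 'd"
  assumes "q \<in> unit_cube" "N > 0"
  shows "\<exists>g\<in>grid N. dinf q g \<le> 1 / real N"
proof -
  define g :: "real ^ 'd" where "g = (\<chi> i. real (nat \<lfloor>q $ i * N\<rfloor>) / real N)"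
  have "g \<in> grid N"
    unfolding grid_def
  proof (safe)
    fix i
    have q: "0 \<le> q$i" "q$i < 1" using assms(1) by (auto simp: unit_cube_def)
    have "\<lfloor>q $ i * N\<rfloor> < N"
      using q assms(2) by (simp add: floor_less_iff)
    hence "nat \<lfloor>q $ i * N\<rfloor> < N" using assms(2) by (simp add: nat_less_iff)
    thus "\<exists>t<N. g $ i = real t / real N" unfolding g_def by auto
  qed
  moreover have "dinf q g \<le> 1 / real N"
    unfolding dinf_le_iff
  proof
    fix i
    have q: "0 \<le> q$i" "q$i < 1" using assms(1) by (auto simp: unit_cube_def)
    have fl0: "0 \<le> \<lfloor>q $ i * N\<rfloor>" using q by simp
    have e: "g$i = \<lfloor>q $ i * N\<rfloor> / N" unfolding g_def using fl0 by simp
    have a1: "\<lfloor>q $ i * N\<rfloor> \<le> q$i * N" "q$i * N < \<lfloor>q $ i * N\<rfloor> + 1" by linarith+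
    have d: "q$i - g$i = (q$i*N - \<lfloor>q $ i * N\<rfloor>) / N" unfolding e using assms(2) by (simp add: field_simps)
    have "0 \<le> q$i - g$i" "q$i - g$i \<le> 1 / N" unfolding d using a1 assms(2) by (auto intro!: divide_right_mono) linarith
    hence "\<bar>q$i - g$i\<bar> \<le> 1 / N" by simp
    thus "circ_dist (q $ i) (g $ i) \<le> 1 / real N" using circ_le_abs order_trans by blast
  qed
  ultimately show ?thesis by blast
qed


definition Near :: "real ^ 'd \<Rightarrow> real \<Rightarrow> (real ^ 'd) set" where
  "Near g s = {y \<in> unit_cube. dinf y g \<le> s}"
definition Far :: "real ^ 'd \<Rightarrow> real \<Rightarrow> (real ^ 'd) set" where
  "Far g s = {y \<in> unit_cube. s < dinf y g}"

definition rho :: "'d itself \<Rightarrow> nat \<Rightarrow> real" where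
  "rho _ m = real CARD('d) / 2 ^ m"

definition Sset :: "nat \<Rightarrow> (nat \<Rightarrow> real) \<Rightarrow> nat set \<Rightarrow> nat \<Rightarrow> real ^ 'd \<Rightarrow> bool \<Rightarrow> (nat \<Rightarrow> real ^ 'd) set" where
  "Sset n w A m g fl = PiE {..<n} (\<lambda>i. if i \<in> A then Near g (4 * omega TYPE('d) w i * rho TYPE('d) m)
       else if fl then Far g (omega TYPE('d) w i * rho TYPE('d) m / (4 * real CARD('d))) else unit_cube)"

lemma rho_N: "rho TYPE('d::finite) m / (4 * real CARD('d)) = 1 / real ((2::nat) ^ (m + 2))"
  unfolding rho_def by (simp add: field_simps power_add)

lemma cover:
  fixes x :: "nat \<Rightarrow> real ^ 'd"
  assumes p1: "p \<ge> 1" and w1: "\<forall>i<n. w i \<ge> 1" and A: "A \<subset> {..<n}" "A \<noteq> {}"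
    and x: "x \<in> PiE {..<n} (\<lambda>_. unit_cube)" and rel: "relevant p n w x A"
  shows "\<exists>m\<le>M. \<exists>g\<in>grid (2^(m+2)). x \<in> Sset n w A m g (m < M)"
proof -
  define a where "a = minsite w A"
  define om where "om = omega TYPE('d) w"
  define d where "d = real CARD('d)"
  have d1: "d \<ge> 1" unfolding d_def by simp
  obtain q r where q: "q \<in> unit_cube" and rR: "r \<ge> R_A p w x A"
    and hq: "tdist p (x a) q \<le> om a * r"
    and ho: "\<forall>i\<in>{..<n} - A. tdist p (x i) q > om i * r"
    using rel unfolding relevant_def Let_def a_def om_def by blast
  have finA: "finite A" using A finite_subset by (metis finite_lessThan psubset_imp_subset)
  have a: "a \<in> A" "\<forall>j\<in>A. w a \<le> w j" using minsite_props[OF finA A(2)] a_def by auto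
  have xc: "x i \<in> unit_cube" if "i < n" for i using x that by auto
  have An: "j \<in> A \<Longrightarrow> j < n" for j using A by auto
  have om1: "i < n \<Longrightarrow> om i \<ge> 1" for i using w1 omega_ge1 om_def by blast
  have oma: "j \<in> A \<Longrightarrow> om a \<le> om j" for j
    unfolding om_def using a w1 An by (intro omega_mono) auto
  have FA: "tdist p (x a) (x j) / (om a + om j) \<le> R_A p w x A" if "j \<in> A" for j
    unfolding R_A_def Let_def a_def[symmetric] om_def
    using finA that by (intro Max_ge) auto
  have td: "i < n \<Longrightarrow> j < n \<Longrightarrow> dinf (x i) (x j) \<le> tdist p (x i) (x j)" for i j
    using tdist_dinf[OF xc xc p1] by blast
  have r0: "0 \<le> r"
  proof -
    have "0 \<le> dinf (x a) (x a)" by (simp add: dinf_self)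
    also have "\<dots> \<le> tdist p (x a) (x a)" using td a An by blast
    finally have "0 \<le> tdist p (x a) (x a) / (om a + om a)" using om1[of a] a An by simp
    thus ?thesis using FA[OF a(1)] rR by linarith
  qed
  have F1: "dinf (x j) (x a) \<le> 2 * om j * r" if j: "j \<in> A" for j
  proof -
    have pos: "0 < om a + om j" using om1 An a j by (smt (verit))
    have "dinf (x j) (x a) = dinf (x a) (x j)" by (rule dinf_sym)
    also have "\<dots> \<le> tdist p (x a) (x j)" using td a An j by blast
    also have "\<dots> \<le> (om a + om j) * R_A p w x A" using FA[OF j] pos by (simp add: pos_divide_le_eq mult.commute)
    also have "\<dots> \<le> (om a + om j) * r" using rR pos by (intro mult_left_mono) auto
    also have "\<dots> \<le> 2 * om j * r" using oma[OF j] r0 by (simp add: algebra_simps mult_left_mono)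
    finally show ?thesis .
  qed
  have F2: "dinf (x a) q \<le> om a * r" using tdist_dinf[OF xc q p1] hq a An by (meson order_trans)
  have F3: "om i * r < d * dinf (x i) q" if "i \<in> {..<n} - A" for i
  proof -
    have "i < n" using that by auto
    hence "tdist p (x i) q \<le> d * dinf (x i) q" using tdist_dinf[OF xc q p1, of i] d_def by blast
    moreover have "om i * r < tdist p (x i) q" using ho that by blast
    ultimately show ?thesis by linarith
  qed
  obtain i0 where i0: "i0 \<in> {..<n} - A" using A by blast
  have rd: "r < d"
  proof -
    have "r \<le> om i0 * r" using om1[of i0] i0 r0 by (simp add: mult_le_cancel_right1)
    also have "\<dots> < d * dinf (x i0) q" using F3[OF i0] .
    also have "\<dots> \<le> d * (1/2)" using d1 dinf_le_half by (intro mult_left_mono) auto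
    finally show ?thesis using d1 by simp
  qed
  have core: "\<exists>g\<in>grid (2^(m+2)). x \<in> Sset n w A m g fl"
    if rm: "r \<le> rho TYPE('d) m" and fl: "fl \<longrightarrow> rho TYPE('d) m / 2 < r" for m fl
  proof -
    define N :: nat where "N = 2^(m+2)"
    define \<rho> where "\<rho> = rho TYPE('d) m"
    have N0: "N > 0" unfolding N_def by simp
    have hN: "1 / real N = \<rho> / (4 * d)" unfolding N_def \<rho>_def d_def by (simp add: rho_N)
    have \<rho>0: "\<rho> > 0" unfolding \<rho>_def rho_def by simp
    have h\<rho>: "1 / real N \<le> \<rho>" unfolding hN using \<rho>0 d1 by (simp add: field_simps)
    obtain g where g: "g \<in> grid N" "dinf q g \<le> 1 / real N" using grid_approx[OF q N0] by blast
    have gc: "g \<in> unit_cube" using g grid_cube N0 by blast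
    have "x \<in> Sset n w A m g fl"
      unfolding Sset_def
    proof (rule PiE_I)
      fix i assume i: "i \<in> {..<n}"
      show "x i \<in> (if i \<in> A then Near g (4 * omega TYPE('d) w i * rho TYPE('d) m)
       else if fl then Far g (omega TYPE('d) w i * rho TYPE('d) m / (4 * real CARD('d))) else unit_cube)"
      proof (cases "i \<in> A")
        case True
        have "dinf (x i) g \<le> dinf (x i) (x a) + dinf (x a) g"
          using xc i a An gc by (intro dinf_tri) auto
        also have "\<dots> \<le> dinf (x i) (x a) + (dinf (x a) q + dinf q g)"
          using xc a An gc q by (intro add_left_mono dinf_tri) auto
        also have "\<dots> \<le> 2 * om i * r + (om a * r + 1 / real N)"
          using F1[OF True] F2 g(2) by linarith
        also have "\<dots> \<le> 2 * om i * \<rho> + (om i * \<rho> + om i * \<rho>)"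
        proof -
          have o1: "om i \<ge> 1" using om1 i by auto
          have "2 * om i * r \<le> 2 * om i * \<rho>" using o1 rm \<rho>_def by simp
          moreover have "om a * r \<le> om i * \<rho>" using oma[OF True] rm r0 \<rho>_def om1[of a] a An
            by (intro mult_mono) auto
          moreover have "1 / real N \<le> om i * \<rho>" using h\<rho> o1 \<rho>0
            by (smt (verit) mult_le_cancel_right1)
          ultimately show ?thesis by linarith
        qed
        also have "\<dots> = 4 * om i * \<rho>" by simp
        finally have "dinf (x i) g \<le> 4 * om i * \<rho>" .
        hence "x i \<in> Near g (4 * omega TYPE('d) w i * rho TYPE('d) m)"
          using xc i unfolding Near_def om_def \<rho>_def by simp
        thus ?thesis using True by simp
      next
        case False
        show ?thesis
        proof (cases fl)
          case True
          have iO: "i \<in> {..<n} - A" using i False by auto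
          have o1: "om i \<ge> 1" using om1 i by auto
          have "dinf (x i) q \<le> dinf (x i) g + dinf g q"
            using xc i gc q by (intro dinf_tri) auto
          hence "dinf (x i) g \<ge> dinf (x i) q - 1 / real N" using g(2) dinf_sym[of g q] by linarith
          moreover have "dinf (x i) q > om i * r / d" using F3[OF iO] d1 by (simp add: field_simps)
          moreover have "om i * r / d \<ge> om i * (\<rho>/2) / d"
            using fl True o1 d1 \<rho>_def by (intro divide_right_mono mult_left_mono) auto
          moreover have "om i * (\<rho>/2) / d - 1 / real N \<ge> om i * \<rho> / (4 * d)"
          proof -
            have "om i * (\<rho>/2) / d - 1 / real N = 2 * (om i * \<rho>) / (4 * d) - \<rho> / (4 * d)"
              unfolding hN using d1 by (simp add: field_simps)
            also have "\<dots> \<ge> om i * \<rho> / (4 * d)"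
            proof -
              have "\<rho> \<le> om i * \<rho>" using o1 \<rho>0 by simp
              hence "om i * \<rho> + \<rho> \<le> 2 * (om i * \<rho>)" by linarith
              thus ?thesis using d1 by (simp add: field_simps)
            qed
            finally show ?thesis .
          qed
          ultimately have "dinf (x i) g > om i * \<rho> / (4 * d)" by linarith
          hence "x i \<in> Far g (omega TYPE('d) w i * rho TYPE('d) m / (4 * real CARD('d)))"
            using xc i unfolding Far_def om_def \<rho>_def d_def by simp
          thus ?thesis using False True by simp
        next
          case False2: False
          show ?thesis using False False2 xc i by simp
        qed
      qed
    next
      fix i assume "i \<notin> {..<n}" thus "x i = undefined" using x by auto
    qed
    thus ?thesis using g N_def by blast
  qed
  show ?thesis
  proof (cases "r \<le> rho TYPE('d) M")
    case True
    then obtain g where "g \<in> grid (2^(M+2))" "x \<in> Sset n w A M g False" using core[of M False] by blast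
    thus ?thesis by (intro exI[of _ M]) auto
  next
    case False
    define m' where "m' = (LEAST j. rho TYPE('d) j < r)"
    have ex: "rho TYPE('d) m' < r" unfolding m'_def by (rule LeastI[of _ M]) (use False in auto)
    have m'M: "m' \<le> M" unfolding m'_def by (rule Least_le) (use False in auto)
    have m'0: "m' \<noteq> 0"
    proof
      assume "m' = 0"
      hence "rho TYPE('d) m' = d" unfolding rho_def d_def by simp
      thus False using ex rd by simp
    qed
    define m where "m = m' - 1"
    have mm: "m' = Suc m" using m'0 m_def by simp
    have rm: "r \<le> rho TYPE('d) m"
    proof -
      have "m < m'" using mm by simp
      hence "\<not> rho TYPE('d) m < r" unfolding m'_def by (rule not_less_Least)
      thus ?thesis by simp
    qed
    have "rho TYPE('d) m' = rho TYPE('d) m / 2" unfolding mm rho_def by simp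
    hence "rho TYPE('d) m / 2 < r" using ex by simp
    moreover have "m < M" using mm m'M by simp
    ultimately obtain g where "g \<in> grid (2^(m+2))" "x \<in> Sset n w A m g (m < M)" using core[OF rm, of True] by auto
    thus ?thesis using \<open>m < M\<close> by (intro exI[of _ m]) auto
  qed
qed


lemma vec_nth_meas[measurable]: "(\<lambda>x::real^'n. x $ j) \<in> borel_measurable borel"
  by (intro borel_measurable_continuous_onI linear_continuous_on bounded_linear_vec_nth)

lemma cube_sets[measurable]: "(unit_cube :: (real^'d) set) \<in> sets borel"
  unfolding unit_cube_def by measurable

lemma Near_sets[measurable]: "Near (g::real^'d) s \<in> sets borel"
proof -
  have "Near g s = unit_cube \<inter> (\<Inter>i. {y. min \<bar>y$i - g$i\<bar> (1 - \<bar>y$i - g$i\<bar>) \<le> s})"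
    unfolding Near_def dinf_le_iff circ_dist_def by auto
  also have "\<dots> \<in> sets borel" by measurable
  finally show ?thesis .
qed

lemma Far_sets[measurable]: "Far (g::real^'d) s \<in> sets borel"
proof -
  have "Far g s = unit_cube - Near g s"
    unfolding Near_def Far_def by auto
  also have "\<dots> \<in> sets borel" by measurable
  finally show ?thesis .
qed

lemma cbox_cart_measure:
  fixes a b :: "real ^ 'd"
  assumes "\<forall>i. a$i \<le> b$i"
  shows "measure lborel (cbox a b) = (\<Prod>i\<in>UNIV. b$i - a$i)"
proof -
  have "a \<in> cbox a b" using assms by (auto simp: mem_box_cart)
  thus ?thesis using content_cbox_cart by blast
qed

lemma emeasure_cbox_fin: "emeasure lborel (cbox a b) \<noteq> top"
  using emeasure_lborel_cbox_finite[of a b] by (simp add: less_top)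

lemma cbox_fmeas: "cbox (a::real^'d) b \<in> fmeasurable lborel"
  unfolding fmeasurable_def using emeasure_lborel_cbox_finite by auto

lemma cube_emeasure: "emeasure lborel (unit_cube :: (real^'d) set) = 1"
proof -
  have "box (0::real^'d) 1 \<subseteq> unit_cube" "unit_cube \<subseteq> cbox (0::real^'d) 1"
    by (auto simp: unit_cube_def mem_box_cart less_imp_le)
  have m1: "measure lborel (cbox (0::real^'d) 1) = 1"
    by (subst cbox_cart_measure) auto
  have m2: "measure lborel (box (0::real^'d) 1) = 1"
    using m1 by (simp add: measure_lborel_box_eq measure_lborel_cbox_eq)
  have "emeasure lborel (box (0::real^'d) 1) \<le> emeasure lborel (unit_cube :: (real^'d) set)"
    using \<open>box 0 1 \<subseteq> unit_cube\<close> by (intro emeasure_mono) auto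
  moreover have "emeasure lborel (unit_cube :: (real^'d) set) \<le> emeasure lborel (cbox (0::real^'d) 1)"
    using \<open>unit_cube \<subseteq> cbox 0 1\<close> by (intro emeasure_mono) auto
  moreover have "emeasure lborel (box (0::real^'d) 1) = 1"
    using m2 emeasure_eq_ennreal_measure[of lborel "box (0::real^'d) 1"] emeasure_lborel_box_finite[of 0 1]
    by (simp add: less_top)
  moreover have "emeasure lborel (cbox (0::real^'d) 1) = 1"
    using m1 emeasure_eq_ennreal_measure[of lborel "cbox (0::real^'d) 1"] emeasure_cbox_fin
    by auto
  ultimately show ?thesis by (metis antisym)
qed

abbreviation U :: "(real ^ 'd) measure" where
  "U \<equiv> uniform_measure lborel unit_cube"

lemma U_prob: "prob_space (U :: (real^'d) measure)"
  by (rule prob_space_uniform_measure) (auto simp: cube_emeasure)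

lemma U_measure: "S \<in> sets borel \<Longrightarrow> measure (U :: (real^'d) measure) S = measure lborel (unit_cube \<inter> S)"
  by (subst measure_uniform_measure) (auto simp: cube_emeasure measure_def)


lemma vecset_card:
  assumes "finite S"
  shows "finite {v::real^'d. \<forall>i. v$i \<in> S} \<and> card {v::real^'d. \<forall>i. v$i \<in> S} \<le> card S ^ CARD('d)"
proof -
  have sub: "{v::real^'d. \<forall>i. v$i \<in> S} \<subseteq> vec_lambda ` (PiE UNIV (\<lambda>_. S))"
  proof
    fix v :: "real^'d" assume "v \<in> {v. \<forall>i. v$i \<in> S}"
    hence "(\<lambda>i. v$i) \<in> PiE UNIV (\<lambda>_. S)" by auto
    thus "v \<in> vec_lambda ` (PiE UNIV (\<lambda>_. S))" by (metis image_eqI vec_lambda_eta)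
  qed
  have fin: "finite (PiE (UNIV::'d set) (\<lambda>_. S))" using assms by (intro finite_PiE) auto
  have "card {v::real^'d. \<forall>i. v$i \<in> S} \<le> card (vec_lambda ` (PiE (UNIV::'d set) (\<lambda>_. S)))"
    using sub fin by (intro card_mono) auto
  also have "\<dots> \<le> card (PiE (UNIV::'d set) (\<lambda>_. S))" by (rule card_image_le[OF fin])
  also have "\<dots> = card S ^ CARD('d)" by (simp add: card_PiE)
  finally show ?thesis using sub fin finite_subset by blast
qed

lemma grid_card: "finite (grid N :: (real^'d) set) \<and> card (grid N :: (real^'d) set) \<le> N ^ CARD('d)"
proof -
  have e: "grid N = {g::real^'d. \<forall>i. g$i \<in> (\<lambda>t. real t / real N) ` {..<N}}"
    unfolding grid_def by auto
  have "card ((\<lambda>t. real t / real N) ` {..<N}) \<le> N"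
    using card_image_le[of "{..<N}"] by fastforce
  hence "card ((\<lambda>t. real t / real N) ` {..<N}) ^ CARD('d) \<le> N ^ CARD('d)" by (rule power_mono) auto
  moreover have "finite {g::real^'d. \<forall>i. g$i \<in> (\<lambda>t. real t / real N) ` {..<N}}"
    "card {g::real^'d. \<forall>i. g$i \<in> (\<lambda>t. real t / real N) ` {..<N}} \<le> card ((\<lambda>t. real t / real N) ` {..<N}) ^ CARD('d)"
    using vecset_card[where S="(\<lambda>t. real t / real N) ` {..<N}" and 'd='d] by auto
  ultimately show ?thesis unfolding e by linarith
qed

lemma Near_measure:
  fixes g :: "real^'d"
  assumes g: "g \<in> unit_cube" and s: "0 \<le> s"
  shows "measure U (Near g s) \<le> (6 * s) ^ CARD('d)"
proof -
  define T where "T = {v::real^'d. \<forall>i. v$i \<in> {-1,0,1}}"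
  define s1 :: "real^'d" where "s1 = (\<chi> i. s)"
  define B where "B v = cbox (g + v - s1) (g + v + s1)" for v
  have Tf: "finite T" and Tc: "card T \<le> 3 ^ CARD('d)"
    using vecset_card[where S="{-1,0,1::real}" and 'd='d] unfolding T_def by (auto simp: numeral_3_eq_3)
  have cov: "Near g s \<subseteq> (\<Union>v\<in>T. B v)"
  proof
    fix y assume y: "y \<in> Near g s"
    have yc: "y \<in> unit_cube" and yd: "\<forall>i. circ_dist (y$i) (g$i) \<le> s"
      using y unfolding Near_def dinf_le_iff by auto
    have ex: "\<forall>i. \<exists>t::real. t \<in> {-1,0,1} \<and> g$i + t - s \<le> y$i \<and> y$i \<le> g$i + t + s"
    proof
      fix i
      have "(g$i - s \<le> y$i \<and> y$i \<le> g$i + s) \<or> (g$i + 1 - s \<le> y$i \<and> y$i \<le> g$i + 1 + s) \<or> (g$i - 1 - s \<le> y$i \<and> y$i \<le> g$i - 1 + s)"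
        using yc g yd by (intro circ_cases) (auto simp: unit_cube_def)
      moreover have "g$i - s \<le> y$i \<and> y$i \<le> g$i + s \<Longrightarrow> \<exists>t::real. t \<in> {-1,0,1} \<and> g$i + t - s \<le> y$i \<and> y$i \<le> g$i + t + s"
        by (rule exI[of _ 0]) simp
      moreover have "g$i + 1 - s \<le> y$i \<and> y$i \<le> g$i + 1 + s \<Longrightarrow> \<exists>t::real. t \<in> {-1,0,1} \<and> g$i + t - s \<le> y$i \<and> y$i \<le> g$i + t + s"
        by (rule exI[of _ 1]) simp
      moreover have "g$i - 1 - s \<le> y$i \<and> y$i \<le> g$i - 1 + s \<Longrightarrow> \<exists>t::real. t \<in> {-1,0,1} \<and> g$i + t - s \<le> y$i \<and> y$i \<le> g$i + t + s"
        by (rule exI[of _ "-1"]) simp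
      ultimately show "\<exists>t::real. t \<in> {-1,0,1} \<and> g$i + t - s \<le> y$i \<and> y$i \<le> g$i + t + s"
        by blast
    qed
    then obtain t where t: "\<forall>i. t i \<in> {-1,0,1} \<and> g$i + t i - s \<le> y$i \<and> y$i \<le> g$i + t i + s"
      using choice[OF ex] by blast
    define v :: "real^'d" where "v = (\<chi> i. t i)"
    have "v \<in> T" unfolding T_def v_def using t by auto
    moreover have "y \<in> B v" unfolding B_def mem_box_cart v_def s1_def using t by auto
    ultimately show "y \<in> (\<Union>v\<in>T. B v)" by blast
  qed
  have fm: "(\<Union>v\<in>T. B v) \<in> fmeasurable lborel"
    using Tf unfolding B_def by (intro fmeasurable.finite_UN) (auto intro: cbox_fmeas)
  have "measure U (Near g s) = measure lborel (unit_cube \<inter> Near g s)" by (rule U_measure) measurable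
  also have "\<dots> \<le> measure lborel (\<Union>v\<in>T. B v)"
  proof (rule measure_mono_fmeasurable[OF _ _ fm])
    show "unit_cube \<inter> Near g s \<subseteq> (\<Union>v\<in>T. B v)" using cov by blast
    show "unit_cube \<inter> Near g s \<in> sets lborel" by simp
  qed
  also have "\<dots> \<le> (\<Sum>v\<in>T. measure lborel (B v))"
    by (rule measure_UNION_le[OF Tf]) (simp add: B_def)
  also have "\<dots> = (\<Sum>v\<in>T. (2 * s) ^ CARD('d))"
  proof (rule sum.cong)
    fix v assume "v \<in> T"
    have "measure lborel (B v) = (\<Prod>i\<in>UNIV. (g + v + s1)$i - (g + v - s1)$i)"
      unfolding B_def using s by (intro cbox_cart_measure) (auto simp: s1_def)
    also have "\<dots> = (2 * s) ^ CARD('d)" by (simp add: s1_def)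
    finally show "measure lborel (B v) = (2 * s) ^ CARD('d)" .
  qed simp
  also have "\<dots> = card T * (2 * s) ^ CARD('d)" by simp
  also have "\<dots> \<le> 3 ^ CARD('d) * (2 * s) ^ CARD('d)"
  proof -
    have "real (card T) \<le> real (3 ^ CARD('d))" using Tc by (simp only: of_nat_le_iff)
    hence "real (card T) \<le> 3 ^ CARD('d)" by simp
    thus ?thesis using s by (intro mult_right_mono) auto
  qed
  also have "\<dots> = (3 * (2 * s)) ^ CARD('d)" by (rule power_mult_distrib[symmetric])
  also have "3 * (2 * s) = 6 * s" by simp
  finally show ?thesis .
qed

lemma Far_measure:
  fixes g :: "real^'d"
  assumes g: "g \<in> unit_cube" and s: "0 \<le> s"
  shows "measure U (Far g s) \<le> exp (- (s ^ CARD('d)))"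
proof (cases "s \<le> 1/2")
  case False
  have "\<not> s < dinf y g" for y using False dinf_le_half[of y g] by linarith
  hence "Far g s = {}" unfolding Far_def by auto
  thus ?thesis by simp
next
  case True
  interpret P: prob_space "U :: (real^'d) measure" by (rule U_prob)
  define s1 :: "real^'d" where "s1 = (\<chi> i. s)"
  define l :: "real^'d" where "l = (\<chi> i. if g$i + s < 1 then g$i else g$i - s)"
  have gi: "0 \<le> g$i" "g$i < 1" for i using g by (auto simp: unit_cube_def)
  have sub: "cbox l (l + s1) \<subseteq> unit_cube \<inter> Near g s"
  proof
    fix y assume "y \<in> cbox l (l + s1)"
    hence y: "\<forall>i. l$i \<le> y$i \<and> y$i \<le> l$i + s" by (auto simp: mem_box_cart s1_def)
    have yc: "0 \<le> y$i \<and> y$i < 1" for i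
      using y[rule_format, of i] gi[of i] True unfolding l_def by (auto split: if_splits)
    have "\<bar>y$i - g$i\<bar> \<le> s" for i
      using y[rule_format, of i] unfolding l_def by (auto split: if_splits)
    hence "circ_dist (y$i) (g$i) \<le> s" for i using circ_le_abs order_trans by blast
    thus "y \<in> unit_cube \<inter> Near g s" using yc unfolding Near_def dinf_le_iff unit_cube_def by auto
  qed
  have "s ^ CARD('d) = measure lborel (cbox l (l + s1))"
    using s by (subst cbox_cart_measure) (auto simp: s1_def)
  also have "\<dots> \<le> measure lborel (unit_cube \<inter> Near g s)"
  proof (rule measure_mono_fmeasurable[OF sub])
    show "cbox l (l + s1) \<in> sets lborel" by simp
    have "unit_cube \<inter> Near g s \<subseteq> cbox 0 1"
      by (auto simp: unit_cube_def mem_box_cart less_imp_le)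
    thus "unit_cube \<inter> Near g s \<in> fmeasurable lborel"
      by (intro fmeasurableI2[OF cbox_fmeas]) auto
  qed
  also have "\<dots> = measure U (Near g s)" by (rule U_measure[symmetric]) measurable
  finally have lo: "s ^ CARD('d) \<le> measure U (Near g s)" .
  have "measure U (Far g s) \<le> measure U (space U - Near g s)"
  proof (rule P.finite_measure_mono)
    show "Far g s \<subseteq> space U - Near g s" by (auto simp: Far_def Near_def)
    have "Near g s \<in> P.events" using Near_sets[of g s] by simp
    thus "space U - Near g s \<in> P.events" by auto
  qed
  also have "\<dots> = 1 - measure U (Near g s)"
  proof -
    have "Near g s \<in> P.events" using Near_sets[of g s] by simp
    thus ?thesis by (rule P.prob_compl)
  qed
  also have "\<dots> \<le> 1 - s ^ CARD('d)" using lo by simp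
  also have "\<dots> \<le> exp (- (s ^ CARD('d)))" using exp_ge_add_one_self[of "- (s ^ CARD('d))"] by simp
  finally show ?thesis .
qed


lemma omega_pow: "w i \<ge> 1 \<Longrightarrow> (omega TYPE('d::finite) w i) ^ CARD('d) = w i"
proof -
  assume "w i \<ge> 1"
  hence "(w i powr (1 / real CARD('d))) powr real CARD('d) = w i" by (simp add: powr_powr)
  moreover have "(w i powr (1 / real CARD('d))) powr real CARD('d) = (w i powr (1 / real CARD('d))) ^ CARD('d)"
    using \<open>w i \<ge> 1\<close> by (intro powr_realpow) simp
  ultimately show ?thesis unfolding omega_def by simp
qed

lemma U_cube: "measure (U :: (real^'d) measure) unit_cube = 1"
proof -
  have "measure (U :: (real^'d) measure) unit_cube = measure lborel (unit_cube :: (real^'d) set)"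
    using U_measure[OF cube_sets] by simp
  also have "\<dots> = 1" by (simp add: measure_def cube_emeasure)
  finally show ?thesis .
qed

lemma Sset_sets: "Sset n w A m (g::real^'d) fl \<in> sets (site_space n :: (nat \<Rightarrow> real^'d) measure)"
  unfolding Sset_def site_space_def by (intro sets_PiM_I_finite) auto

lemma Sset_measure:
  fixes g :: "real ^ 'd"
  assumes w1: "\<forall>i<n. w i \<ge> 1" and A: "A \<subseteq> {..<n}" and g: "g \<in> unit_cube"
  shows "measure (site_space n :: (nat \<Rightarrow> real^'d) measure) (Sset n w A m g fl)
    \<le> 24 ^ (CARD('d) * card A) * (\<Prod>i\<in>A. w i) * (rho TYPE('d) m ^ CARD('d)) ^ card A
       * (if fl then exp (- (\<Sum>i\<in>{..<n} - A. w i) * (rho TYPE('d) m / (4 * real CARD('d))) ^ CARD('d)) else 1)"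
proof -
  define D where "D = CARD('d)"
  define \<rho> where "\<rho> = rho TYPE('d) m"
  define c where "c = (\<rho> / (4 * real D)) ^ D"
  have \<rho>0: "\<rho> > 0" unfolding \<rho>_def rho_def by simp
  define F where "F i = (if i \<in> A then Near g (4 * omega TYPE('d) w i * \<rho>)
       else if fl then Far g (omega TYPE('d) w i * \<rho> / (4 * real D)) else unit_cube)" for i
  interpret PS: product_sigma_finite "\<lambda>_::nat. U :: (real^'d) measure"
    unfolding product_sigma_finite_def
  proof
    fix i :: nat
    interpret P: prob_space "U :: (real^'d) measure" by (rule U_prob)
    show "sigma_finite_measure (U :: (real^'d) measure)" by unfold_locales
  qed
  interpret P: prob_space "U :: (real^'d) measure" by (rule U_prob)
  have Fs: "F i \<in> sets (U :: (real^'d) measure)" for i unfolding F_def by simp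
  have S: "Sset n w A m g fl = PiE {..<n} F" unfolding Sset_def F_def \<rho>_def D_def by simp
  have "emeasure (site_space n :: (nat \<Rightarrow> real^'d) measure) (Sset n w A m g fl)
      = (\<Prod>i\<in>{..<n}. emeasure U (F i))"
    unfolding S site_space_def by (rule PS.emeasure_PiM) (simp, rule Fs)
  also have "\<dots> = (\<Prod>i\<in>{..<n}. ennreal (measure U (F i)))"
    by (intro prod.cong refl P.emeasure_eq_measure)
  also have "\<dots> = ennreal (\<Prod>i\<in>{..<n}. measure U (F i))"
    by (rule prod_ennreal) simp
  finally have meq: "measure (site_space n :: (nat \<Rightarrow> real^'d) measure) (Sset n w A m g fl)
      = (\<Prod>i\<in>{..<n}. measure U (F i))"
    unfolding measure_def by (simp add: prod_nonneg)
  have split: "(\<Prod>i\<in>{..<n}. measure U (F i)) = (\<Prod>i\<in>A. measure U (F i)) * (\<Prod>i\<in>{..<n} - A. measure U (F i))"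
    using A by (metis finite_lessThan prod.subset_diff mult.commute)
  have bA: "(\<Prod>i\<in>A. measure U (F i)) \<le> (\<Prod>i\<in>A. 24 ^ D * w i * \<rho> ^ D)"
  proof (rule prod_mono)
    fix i assume i: "i \<in> A"
    have wi: "w i \<ge> 1" using w1 A i by auto
    have om: "omega TYPE('d) w i \<ge> 1" using omega_ge1 wi by blast
    have "measure U (F i) \<le> (6 * (4 * omega TYPE('d) w i * \<rho>)) ^ D"
      unfolding F_def D_def using i Near_measure[OF g, of "4 * omega TYPE('d) w i * \<rho>"] om \<rho>0 by simp
    also have "\<dots> = 24 ^ D * (omega TYPE('d) w i) ^ D * \<rho> ^ D"
      by (simp add: power_mult_distrib)
    also have "\<dots> = 24 ^ D * w i * \<rho> ^ D" unfolding D_def using omega_pow[where 'd='d, of w i, OF wi] by simp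
    finally show "0 \<le> measure U (F i) \<and> measure U (F i) \<le> 24 ^ D * w i * \<rho> ^ D" by simp
  qed
  have pA: "(\<Prod>i\<in>A. 24 ^ D * w i * \<rho> ^ D) = 24 ^ (D * card A) * (\<Prod>i\<in>A. w i) * (\<rho> ^ D) ^ card A"
    by (simp add: prod.distrib power_mult)
  have bO: "(\<Prod>i\<in>{..<n} - A. measure U (F i)) \<le> (if fl then exp (- (\<Sum>i\<in>{..<n} - A. w i) * c) else 1)"
  proof (cases fl)
    case True
    have "(\<Prod>i\<in>{..<n} - A. measure U (F i)) \<le> (\<Prod>i\<in>{..<n} - A. exp (- (w i * c)))"
    proof (rule prod_mono)
      fix i assume i: "i \<in> {..<n} - A"
      have wi: "w i \<ge> 1" using w1 i by auto
      have om: "omega TYPE('d) w i \<ge> 1" using omega_ge1 wi by blast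
      have "measure U (F i) \<le> exp (- ((omega TYPE('d) w i * \<rho> / (4 * real D)) ^ D))"
        unfolding F_def D_def using i True Far_measure[OF g, of "omega TYPE('d) w i * \<rho> / (4 * real CARD('d))"] om \<rho>0 by simp
      also have "(omega TYPE('d) w i * \<rho> / (4 * real D)) ^ D = (omega TYPE('d) w i) ^ D * c"
        unfolding c_def by (simp add: power_mult_distrib power_divide)
      also have "(omega TYPE('d) w i) ^ D = w i" unfolding D_def using omega_pow[where 'd='d, of w i, OF wi] by simp
      finally show "0 \<le> measure U (F i) \<and> measure U (F i) \<le> exp (- (w i * c))" by simp
    qed
    also have "\<dots> = exp (\<Sum>i\<in>{..<n} - A. - (w i * c))" by (simp add: exp_sum)
    also have "(\<Sum>i\<in>{..<n} - A. - (w i * c)) = - (\<Sum>i\<in>{..<n} - A. w i) * c"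
      by (simp add: sum_distrib_right sum_negf)
    finally show ?thesis using True by simp
  next
    case False
    have "(\<Prod>i\<in>{..<n} - A. measure U (F i)) = (\<Prod>i\<in>{..<n} - A. 1)"
      by (intro prod.cong refl) (simp add: F_def False U_cube)
    thus ?thesis using False by simp
  qed
  have "(\<Prod>i\<in>{..<n}. measure U (F i)) \<le> (\<Prod>i\<in>A. 24 ^ D * w i * \<rho> ^ D) * (if fl then exp (- (\<Sum>i\<in>{..<n} - A. w i) * c) else 1)"
    unfolding split
  proof (intro mult_mono bA bO)
    show "0 \<le> (\<Prod>i\<in>A. 24 ^ D * w i * \<rho> ^ D)"
      using w1 A \<rho>0 by (intro prod_nonneg) (auto intro!: mult_nonneg_nonneg dest!: subsetD)
  qed (auto intro!: prod_nonneg)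
  also have "\<dots> = 24 ^ (D * card A) * (\<Prod>i\<in>A. w i) * (\<rho> ^ D) ^ card A * (if fl then exp (- (\<Sum>i\<in>{..<n} - A. w i) * c) else 1)"
    by (simp only: pA)
  finally show ?thesis unfolding meq c_def \<rho>_def D_def .
qed


lemma pow_exp_bound:
  fixes t :: real
  assumes t: "t > 0" and k: "k \<ge> 1"
  shows "t ^ (k - 1) * exp (- t) \<le> real k ^ k / t"
proof -
  have "(1 + t / real k) ^ k \<le> exp t"
    using t k by (intro exp_ge_one_plus_x_over_n_power_n) auto
  moreover have "(t / real k) ^ k \<le> (1 + t / real k) ^ k"
    using t k by (intro power_mono) auto
  ultimately have "t ^ k / real k ^ k \<le> exp t" by (simp add: power_divide)
  hence tk: "t ^ k \<le> real k ^ k * exp t" using k by (simp add: field_simps)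
  have "t ^ (k - 1) * exp (- t) = t ^ k / t * exp (- t)"
    using t k by (simp add: power_eq_if[of t k] field_simps)
  also have "\<dots> = t ^ k * exp (- t) / t" by simp
  also have "\<dots> \<le> real k ^ k * exp t * exp (- t) / t"
    using tk t by (intro divide_right_mono mult_right_mono) auto
  also have "\<dots> = real k ^ k / t" by (simp add: exp_minus field_simps)
  finally show ?thesis .
qed

lemma geom_half: "(\<Sum>m<M. (1/2::real) ^ (M - Suc m)) \<le> 2"
proof -
  have "(\<Sum>m<M. (1/2::real) ^ (M - Suc m)) = (\<Sum>m<M. (1/2::real) ^ m)"
    by (rule sum.nat_diff_reindex)
  also have "\<dots> = (1 - (1/2) ^ M) / (1 - 1/2)" by (subst sum_gp_strict) simp
  also have "\<dots> \<le> 2" by simp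
  finally show ?thesis .
qed

lemma scale_sum:
  fixes t :: "nat \<Rightarrow> real"
  assumes big: "\<forall>m<M. t m \<ge> 2 ^ (M - Suc m)" and last: "0 \<le> t M" "t M \<le> 1" and k: "k \<ge> 1"
  shows "(\<Sum>m\<in>{..M}. t m ^ (k - 1) * (if m < M then exp (- t m) else 1)) \<le> 2 * real k ^ k + 1"
proof -
  have "(\<Sum>m\<in>{..M}. t m ^ (k - 1) * (if m < M then exp (- t m) else 1))
      = (\<Sum>m<M. t m ^ (k - 1) * exp (- t m)) + t M ^ (k - 1)"
    by (simp add: lessThan_Suc_atMost[symmetric])
  also have "(\<Sum>m<M. t m ^ (k - 1) * exp (- t m)) \<le> (\<Sum>m<M. real k ^ k * (1/2) ^ (M - Suc m))"
  proof (rule sum_mono)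
    fix m assume "m \<in> {..<M}"
    hence tm: "t m \<ge> 2 ^ (M - Suc m)" using big by auto
    have tp: "t m > 0" using tm by (smt (verit) zero_less_power)
    have "t m ^ (k - 1) * exp (- t m) \<le> real k ^ k / t m" by (rule pow_exp_bound[OF tp k])
    also have "\<dots> \<le> real k ^ k / 2 ^ (M - Suc m)"
      using tm tp by (intro divide_left_mono) auto
    also have "\<dots> = real k ^ k * (1/2) ^ (M - Suc m)" by (simp add: power_divide)
    finally show "t m ^ (k - 1) * exp (- t m) \<le> real k ^ k * (1/2) ^ (M - Suc m)" .
  qed
  also have "(\<Sum>m<M. real k ^ k * (1/2) ^ (M - Suc m)) \<le> real k ^ k * 2"
    by (simp only: sum_distrib_left[symmetric]) (intro mult_left_mono geom_half, simp)
  also have "t M ^ (k - 1) \<le> 1" using last by (intro power_le_one) auto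
  finally show ?thesis by simp
qed


lemma bucket:
  fixes n :: nat and w :: "nat \<Rightarrow> real"
  assumes w1: "\<forall>i<n. w i \<ge> 1" and A: "A \<subseteq> {..<n}" and k: "card A = k" "k \<ge> 1"
  shows "(\<Sum>g\<in>(grid (2^(m+2)) :: (real^'d) set). measure (site_space n :: (nat \<Rightarrow> real^'d) measure) (Sset n w A m g fl))
    \<le> (96 * real CARD('d)) ^ (CARD('d) * k) * (\<Prod>i\<in>A. w i) * ((1 / real ((2::nat)^(m+2))) ^ CARD('d)) ^ (k - 1)
       * (if fl then exp (- (\<Sum>i\<in>{..<n} - A. w i) * (1 / real ((2::nat)^(m+2))) ^ CARD('d)) else 1)"
proof -
  define D where "D = CARD('d)"
  define N :: nat where "N = 2^(m+2)"
  define z where "z = 1 / real N"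
  define Y where "Y = z ^ D"
  define \<rho> where "\<rho> = rho TYPE('d) m"
  define E where "E = (if fl then exp (- (\<Sum>i\<in>{..<n} - A. w i) * Y) else 1)"
  define P where "P = (\<Prod>i\<in>A. w i)"
  have D1: "D \<ge> 1" unfolding D_def by simp
  have N0: "N > 0" unfolding N_def by simp
  have z0: "z > 0" unfolding z_def using N0 by simp
  have rz: "\<rho> / (4 * real D) = z" unfolding \<rho>_def D_def z_def N_def by (rule rho_N)
  have \<rho>: "\<rho> = 4 * real D * z" using rz D1 by (simp add: field_simps)
  have E0: "0 \<le> E" unfolding E_def by simp
  have P0: "0 \<le> P" unfolding P_def using w1 A by (intro prod_nonneg) (auto dest!: subsetD)
  have bnd: "measure (site_space n :: (nat \<Rightarrow> real^'d) measure) (Sset n w A m g fl)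
      \<le> 24 ^ (D * k) * P * (\<rho> ^ D) ^ k * E" if g: "g \<in> (grid N :: (real^'d) set)" for g
  proof -
    have gc: "g \<in> unit_cube" using g grid_cube N0 by blast
    have h: "measure (site_space n :: (nat \<Rightarrow> real^'d) measure) (Sset n w A m g fl)
      \<le> 24 ^ (D * k) * P * (\<rho> ^ D) ^ k * (if fl then exp (- (\<Sum>i\<in>{..<n} - A. w i) * (\<rho> / (4 * real D)) ^ D) else 1)"
      using Sset_measure[OF w1 A gc, of m fl] unfolding D_def P_def \<rho>_def k(1) .
    thus ?thesis unfolding rz Y_def[symmetric] E_def[symmetric] .
  qed
  have gc: "finite (grid N :: (real^'d) set)" "card (grid N :: (real^'d) set) \<le> N ^ D"
    using grid_card[where 'd='d, of N] unfolding D_def by auto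
  have "(\<Sum>g\<in>(grid N :: (real^'d) set). measure (site_space n :: (nat \<Rightarrow> real^'d) measure) (Sset n w A m g fl))
      \<le> (\<Sum>g\<in>(grid N :: (real^'d) set). 24 ^ (D * k) * P * (\<rho> ^ D) ^ k * E)"
    by (rule sum_mono) (rule bnd)
  also have "\<dots> = real (card (grid N :: (real^'d) set)) * (24 ^ (D * k) * P * (\<rho> ^ D) ^ k * E)" by simp
  also have "\<dots> \<le> real N ^ D * (24 ^ (D * k) * P * (\<rho> ^ D) ^ k * E)"
  proof (rule mult_right_mono)
    have "real (card (grid N :: (real^'d) set)) \<le> real (N ^ D)" using gc(2) by (simp only: of_nat_le_iff)
    thus "real (card (grid N :: (real^'d) set)) \<le> real N ^ D" by simp
    show "0 \<le> 24 ^ (D * k) * P * (\<rho> ^ D) ^ k * E" using P0 E0 \<rho> z0 by simp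
  qed
  also have "real N ^ D * (24 ^ (D * k) * P * (\<rho> ^ D) ^ k * E) = (96 * real D) ^ (D * k) * P * Y ^ (k - 1) * E"
  proof -
    have NY: "real N ^ D * Y = 1" unfolding Y_def z_def using N0 by (simp add: power_one_over)
    have "(\<rho> ^ D) ^ k = ((4 * real D) ^ D) ^ k * Y ^ k" unfolding \<rho> Y_def by (simp add: power_mult_distrib)
    also have "\<dots> = (4 * real D) ^ (D * k) * Y ^ k" by (simp add: power_mult)
    finally have r: "(\<rho> ^ D) ^ k = (4 * real D) ^ (D * k) * Y ^ k" .
    have Yk: "Y ^ k = Y * Y ^ (k - 1)" using k(2) by (metis Suc_diff_1 less_le_trans power_Suc zero_less_one)
    have "real N ^ D * (24 ^ (D * k) * P * (\<rho> ^ D) ^ k * E)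
        = (real N ^ D * Y) * (24 ^ (D * k) * (4 * real D) ^ (D * k)) * P * Y ^ (k - 1) * E"
      unfolding r Yk by (simp only: mult_ac)
    also have "\<dots> = (96 * real D) ^ (D * k) * P * Y ^ (k - 1) * E"
    proof -
      have "(24::real) ^ (D * k) * (4 * real D) ^ (D * k) = (24 * (4 * real D)) ^ (D * k)"
        by (rule power_mult_distrib[symmetric])
      also have "24 * (4 * real D) = 96 * real D" by simp
      finally show ?thesis unfolding NY by simp
    qed
    finally show ?thesis .
  qed
  finally show ?thesis unfolding D_def N_def P_def E_def Y_def z_def .
qed

lemma site_prob: "prob_space (site_space n :: (nat \<Rightarrow> real^'d) measure)"
  unfolding site_space_def by (intro prob_space_PiM U_prob)

lemma G0_measure: "measure (site_space n :: (nat \<Rightarrow> real^'d) measure) (PiE {..<n} (\<lambda>_. unit_cube)) = 1"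
proof -
  interpret PS: product_sigma_finite "\<lambda>_::nat. U :: (real^'d) measure"
    unfolding product_sigma_finite_def
  proof
    fix i :: nat
    interpret P: prob_space "U :: (real^'d) measure" by (rule U_prob)
    show "sigma_finite_measure (U :: (real^'d) measure)" by unfold_locales
  qed
  interpret P: prob_space "U :: (real^'d) measure" by (rule U_prob)
  have "emeasure (site_space n :: (nat \<Rightarrow> real^'d) measure) (PiE {..<n} (\<lambda>_. unit_cube))
      = (\<Prod>i\<in>{..<n}. emeasure (U :: (real^'d) measure) unit_cube)"
    unfolding site_space_def by (rule PS.emeasure_PiM) simp_all
  also have "\<dots> = 1" using U_cube[where 'd='d] P.emeasure_eq_measure by simp
  finally show ?thesis by (simp add: measure_def)
qed


theorem mainTheorem15:
  fixes k :: nat and p :: ennreal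
  assumes "k \<ge> 2" and "p \<ge> 1"
  shows "\<exists>c::real. \<forall>(n::nat) (w::nat \<Rightarrow> real) (A::nat set).
     (\<forall>i<n. w i \<ge> 1) \<longrightarrow> A \<subset> {..<n} \<longrightarrow> card A = k \<longrightarrow>
     (\<exists>B \<in> sets (site_space n :: (nat \<Rightarrow> real ^ 'd::finite) measure).
        {x \<in> space (site_space n :: (nat \<Rightarrow> real ^ 'd) measure). relevant p n w x A} \<subseteq> B \<and>
        measure (site_space n :: (nat \<Rightarrow> real ^ 'd) measure) B
          \<le> c * (\<Prod>i\<in>A. w i) / (\<Sum>i\<in>{..<n} - A. w i) ^ (k - 1))"
proof -
  define K where "K = (96 * real CARD('d)) ^ (CARD('d) * k)"
  define c where "c = K * (2 * real k ^ k + 1)"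
  have k1: "k \<ge> 1" using assms(1) by simp
  show ?thesis
  proof (intro exI[of _ c] allI impI)
    fix n :: nat and w :: "nat \<Rightarrow> real" and A :: "nat set"
    assume w1: "\<forall>i<n. 1 \<le> w i" and A: "A \<subset> {..<n}" and kA: "card A = k"
    let ?S = "site_space n :: (nat \<Rightarrow> real^'d) measure"
    interpret P: prob_space ?S by (rule site_prob)
    define W where "W = (\<Sum>i\<in>{..<n} - A. w i)"
    define P where "P = (\<Prod>i\<in>A. w i)"
    obtain i0 where i0: "i0 \<in> {..<n} - A" using A by blast
    have W1: "W \<ge> 1"
    proof -
      have "w i0 \<le> W" unfolding W_def using i0 w1 by (intro member_le_sum) auto
      thus ?thesis using w1 i0 by auto
    qed
    have P0: "0 \<le> P" unfolding P_def using w1 A by (intro prod_nonneg) auto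
    have Ane: "A \<noteq> {}" using kA assms(1) by auto
    define Y where "Y m = (1 / real ((2::nat)^(m+2))) ^ CARD('d)" for m
    define t where "t m = W * Y m" for m
    have Y0: "Y m > 0" for m unfolding Y_def by simp
    have ex: "\<exists>m. t m \<le> 1"
    proof -
      obtain m where m: "(1/2::real) ^ m < 1 / W" using real_arch_pow_inv[of "1/W" "1/2"] W1 by auto
      have h2: "1 / real ((2::nat)^(m+2)) = (1/2::real)^(m+2)" by (simp add: power_one_over)
      have "Y m = (1/2::real) ^ ((m+2) * CARD('d))" unfolding Y_def h2 by (rule power_mult[symmetric])
      also have "\<dots> \<le> (1/2) ^ m"
      proof (rule power_decreasing)
        have "m \<le> (m+2) * 1" by simp
        also have "\<dots> \<le> (m+2) * CARD('d)" by (intro mult_le_mono2) simp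
        finally show "m \<le> (m+2) * CARD('d)" .
      qed auto
      finally have "t m \<le> W * (1/2) ^ m" unfolding t_def using W1 by (intro mult_left_mono) auto
      also have "\<dots> \<le> W * (1 / W)" using m W1 by (intro mult_left_mono) auto
      also have "\<dots> = 1" using W1 by simp
      finally show ?thesis by blast
    qed
    define M where "M = (LEAST m. t m \<le> 1)"
    have tM: "t M \<le> 1" unfolding M_def using ex by (rule LeastI_ex)
    have tM0: "0 \<le> t M" unfolding t_def using W1 Y0[of M] by simp
    have big: "\<forall>m<M. t m \<ge> 2 ^ (M - Suc m)"
    proof (intro allI impI)
      fix m assume mM: "m < M"
      have t1: "\<not> t (M - 1) \<le> 1" unfolding M_def by (rule not_less_Least) (use mM M_def in auto)
      define j where "j = M - Suc m"
      have Mj: "M + 1 = (m + 2) + j" unfolding j_def using mM by simp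
      have h3: "1 / real ((2::nat)^(m+2)) = 1 / real ((2::nat)^(M+1)) * 2 ^ j"
        unfolding Mj by (simp add: power_add)
      have e: "M - 1 + 2 = M + 1" using mM by simp
      have "Y m = (1 / real ((2::nat)^(M+1)) * 2 ^ j) ^ CARD('d)" unfolding Y_def h3 ..
      also have "\<dots> = (1 / real ((2::nat)^(M+1))) ^ CARD('d) * (2 ^ j) ^ CARD('d)" by (rule power_mult_distrib)
      also have "\<dots> = Y (M - 1) * (2 ^ j) ^ CARD('d)" unfolding Y_def e ..
      finally have "Y m = Y (M - 1) * (2 ^ j) ^ CARD('d)" .
      hence tm: "t m = t (M - 1) * (2 ^ j) ^ CARD('d)" unfolding t_def by simp
      have "(2::real) ^ j \<le> (2 ^ j) ^ CARD('d)"
        using power_increasing[of 1 "CARD('d)" "(2::real)^j"] by simp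
      also have "\<dots> \<le> t (M - 1) * (2 ^ j) ^ CARD('d)" using t1 by simp
      finally show "t m \<ge> 2 ^ (M - Suc m)" unfolding tm j_def .
    qed
    have sumb: "(\<Sum>m\<in>{..M}. t m ^ (k - 1) * (if m < M then exp (- t m) else 1)) \<le> 2 * real k ^ k + 1"
      by (rule scale_sum[OF big tM0 tM k1])
    define G0 where "G0 = PiE {..<n} (\<lambda>_. unit_cube :: (real^'d) set)"
    define Uc where "Uc = (\<Union>m\<in>{..M}. \<Union>g\<in>(grid (2^(m+2)) :: (real^'d) set). Sset n w A m g (m < M))"
    define B where "B = (space ?S - G0) \<union> Uc"
    have G0s: "G0 \<in> sets ?S" unfolding G0_def site_space_def by (intro sets_PiM_I_finite) auto
    have gfin: "finite (grid N :: (real^'d) set)" for N using grid_card[where 'd='d, of N] by blast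
    have Us: "(\<Union>g\<in>(grid (2^(m+2)) :: (real^'d) set). Sset n w A m g (m < M)) \<in> sets ?S" for m
      by (intro sets.finite_UN gfin ballI Sset_sets)
    have Ucs: "Uc \<in> sets ?S" unfolding Uc_def by (intro sets.finite_UN Us) auto
    have Bs: "B \<in> sets ?S" unfolding B_def using G0s Ucs by auto
    have sub: "{x \<in> space ?S. relevant p n w x A} \<subseteq> B"
    proof
      fix x assume x: "x \<in> {x \<in> space ?S. relevant p n w x A}"
      show "x \<in> B"
      proof (cases "x \<in> G0")
        case False thus ?thesis using x unfolding B_def by auto
      next
        case True
        then obtain m g where "m \<le> M" "g \<in> (grid (2^(m+2)) :: (real^'d) set)" "x \<in> Sset n w A m g (m < M)"
          using cover[OF assms(2) w1 A Ane, of x M] x unfolding G0_def by blast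
        thus ?thesis unfolding B_def Uc_def by blast
      qed
    qed
    have mG0: "measure ?S (space ?S - G0) = 0"
      using P.prob_compl[OF G0s] G0_measure[where 'd='d, of n] unfolding G0_def by simp
    have "measure ?S B \<le> measure ?S (space ?S - G0) + measure ?S Uc"
      unfolding B_def using G0s Ucs by (intro measure_subadditive) (auto simp: P.emeasure_eq_measure)
    also have "\<dots> = measure ?S Uc" using mG0 by simp
    also have "\<dots> \<le> (\<Sum>m\<in>{..M}. measure ?S (\<Union>g\<in>(grid (2^(m+2)) :: (real^'d) set). Sset n w A m g (m < M)))"
      unfolding Uc_def by (rule measure_UNION_le) (simp, rule Us)
    also have "\<dots> \<le> (\<Sum>m\<in>{..M}. K * P / W ^ (k - 1) * (t m ^ (k - 1) * (if m < M then exp (- t m) else 1)))"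
    proof (rule sum_mono)
      fix m assume "m \<in> {..M}"
      have "measure ?S (\<Union>g\<in>(grid (2^(m+2)) :: (real^'d) set). Sset n w A m g (m < M))
          \<le> (\<Sum>g\<in>(grid (2^(m+2)) :: (real^'d) set). measure ?S (Sset n w A m g (m < M)))"
        by (rule measure_UNION_le[OF gfin]) (rule Sset_sets)
      also have "\<dots> \<le> K * P * Y m ^ (k - 1) * (if m < M then exp (- W * Y m) else 1)"
        using bucket[OF w1 _ kA k1, of m "m < M"] A unfolding K_def P_def W_def Y_def by auto
      also have "\<dots> = K * P / W ^ (k - 1) * (t m ^ (k - 1) * (if m < M then exp (- t m) else 1))"
        unfolding t_def using W1 by (simp add: power_mult_distrib field_simps)
      finally show "measure ?S (\<Union>g\<in>(grid (2^(m+2)) :: (real^'d) set). Sset n w A m g (m < M))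
          \<le> K * P / W ^ (k - 1) * (t m ^ (k - 1) * (if m < M then exp (- t m) else 1))" .
    qed
    also have "\<dots> = K * P / W ^ (k - 1) * (\<Sum>m\<in>{..M}. t m ^ (k - 1) * (if m < M then exp (- t m) else 1))"
      by (simp add: sum_distrib_left)
    also have "\<dots> \<le> K * P / W ^ (k - 1) * (2 * real k ^ k + 1)"
      using sumb P0 W1 by (intro mult_left_mono) (auto simp: K_def)
    also have "\<dots> = c * P / W ^ (k - 1)" unfolding c_def by simp
    finally show "\<exists>B \<in> sets ?S. {x \<in> space ?S. relevant p n w x A} \<subseteq> B \<and>
        measure ?S B \<le> c * (\<Prod>i\<in>A. w i) / (\<Sum>i\<in>{..<n} - A. w i) ^ (k - 1)"
      using Bs sub unfolding P_def W_def by blast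
  qed
qed


end
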